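(* Let $D_1\supset D_2\supset D_3\supset\cdots$ be closed topological disks in $\mathbb{R}^2$ and let $\varepsilon>0$. Then there exists $N$ such that whenever $n\ge N$ and $U$ is a component of $D_n\setminus D_{n+1}$, $U$ is $\varepsilon$ thin.
   Context: A set $U\subset\mathbb{R}^2$ is $\varepsilon$ thin if for every $x\in U$ the open round disk $B(x,\varepsilon)$ meets $\mathbb{R}^2\setminus U$. *)

theory Defs
  imports "HOL-Analysis.Analysis"
begin

definition closed_top_disk :: "(real^2) set \<Rightarrow> bool" where
  "closed_top_disk D \<longleftrightarrow> D homeomorphic cball (0::real^2) 1"

definition eps_thin :: "real \<Rightarrow> (real^2) set \<Rightarrow> bool" where
  "eps_thin e U \<longleftrightarrow> (\<forall>x\<in>U. ball x e \<inter> (UNIV - U) \<noteq> {})"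

end

theory Submission
  imports Defs
begin

theorem mainTheorem19:
  fixes D :: "nat \<Rightarrow> (real^2) set" and e :: real
  assumes disks: "\<And>n. closed_top_disk (D n)"
    and nested: "\<And>n. D (Suc n) \<subseteq> D n"
    and epos: "e > 0"
  shows "\<exists>N. \<forall>n\<ge>N. \<forall>U\<in>components (D n - D (Suc n)). eps_thin e U"
proof -
  have mono: "D m \<subseteq> D n" if "n \<le> m" for m n
    using that by (induction rule: dec_induct) (use nested in blast)+
  define B where "B = {n. \<exists>x. ball x e \<subseteq> D n - D (Suc n)}"
  define p where "p n = (SOME x. ball x e \<subseteq> D n - D (Suc n))" for n
  have pB: "ball (p n) e \<subseteq> D n - D (Suc n)" if "n \<in> B" for n
    using that unfolding B_def p_def by (metis (mono_tags, lifting) mem_Collect_eq someI_ex)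
  have pin: "p n \<in> D n - D (Suc n)" if "n \<in> B" for n
    using pB[OF that] epos centre_in_ball by blast
  have sep: "dist (p n) (p m) \<ge> e" if "n \<in> B" "m \<in> B" "n < m" for n m
  proof (rule ccontr)
    assume "\<not> ?thesis"
    then have "p m \<in> ball (p n) e" by simp
    then have "p m \<notin> D (Suc n)" using pB[OF that(1)] by auto
    moreover have "p m \<in> D (Suc n)" using pin[OF that(2)] mono[of "Suc n" m] that(3) by auto
    ultimately show False by simp
  qed
  have sep2: "dist (p n) (p m) \<ge> e" if "n \<in> B" "m \<in> B" "n \<noteq> m" for n m
    using sep[of n m] sep[of m n] that by (metis dist_commute linorder_neqE_nat)
  have finB: "finite B"
  proof (rule ccontr)
    assume infB: "infinite B"
    have inj: "inj_on p B"
      using sep2 epos by (metis dist_self inj_onI not_le)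
    have inf: "infinite (p ` B)" using infB inj finite_imageD by blast
    have "compact (D 0)" using disks[of 0] unfolding closed_top_disk_def
      using homeomorphic_compactness compact_cball by blast
    hence bd: "bounded (D 0)" by (rule compact_imp_bounded)
    have "p ` B \<subseteq> D 0" using pin mono[of 0] by blast
    hence "bounded (p ` B)" using bd bounded_subset by blast
    then obtain z where "z islimpt (p ` B)" using inf bounded_infinite_imp_islimpt[of "p ` B" "p ` B"] by blast
    hence "infinite (p ` B \<inter> ball z (e/2))" using epos islimpt_eq_infinite_ball[of z "p ` B"] by (meson half_gt_zero)
    then obtain a b where ab: "a \<in> p ` B \<inter> ball z (e/2)" "b \<in> p ` B \<inter> ball z (e/2)" "a \<noteq> b"
      by (metis finite.emptyI finite_insert infinite_imp_nonempty insertI1 insert_iff subsetI finite_subset)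
    then obtain n m where "n \<in> B" "m \<in> B" "a = p n" "b = p m" "n \<noteq> m" by auto
    hence "dist a b \<ge> e" using sep2 by auto
    moreover have "dist a b < e"
    proof -
      have "dist z a < e/2" "dist z b < e/2" using ab by auto
      moreover have "dist a b \<le> dist z a + dist z b" by (metis dist_commute dist_triangle)
      ultimately show ?thesis by linarith
    qed
    ultimately show False by simp
  qed
  then obtain N where N: "\<forall>n\<in>B. n < N" using finite_nat_bounded by blast
  show ?thesis
  proof (intro exI allI impI ballI)
    fix n U assume n: "N \<le> n" and U: "U \<in> components (D n - D (Suc n))"
    have "n \<notin> B" using N n by auto
    have sub: "U \<subseteq> D n - D (Suc n)" using U in_components_subset by blast
    show "eps_thin e U" unfolding eps_thin_def
    proof
      fix x assume "x \<in> U"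
      show "ball x e \<inter> (UNIV - U) \<noteq> {}"
      proof
        assume "ball x e \<inter> (UNIV - U) = {}"
        hence "ball x e \<subseteq> D n - D (Suc n)" using sub by blast
        thus False using \<open>n \<notin> B\<close> B_def by blast
      qed
    qed
  qed
qed

end
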